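(* Let $N\ge 0$, $k\ge1$ be integers and $f:\{0,\dots,N\}^k\to\{\mathbf{true},\mathbf{false}\}$ a feasibility function. Then $\textsc{ParetoEnumerate}(N,k,f)$ (with arbitrary choices of the picked element in each iteration) terminates, and at the end of its main loop the set $P$ it returns is exactly the set of all Pareto points of $f$.
   Context: For $\vec x,\vec x'\in\{0,\dots,N\}^k$, $\vec x\le_k\vec x'$ iff $x_i\le x'_i$ for all $i$; $\vec x$ is smaller than $\vec x'$ (and $\vec x'$ greater than $\vec x$) if $\vec x\le_k\vec x'$ and $\vec x\neq\vec x'$. A feasibility function is a monotone $f:\{0,\dots,N\}^k\to\{\mathbf{true},\mathbf{false}\}$: if $f(\vec x)=\mathbf{true}$ then $f(\vec x')=\mathbf{true}$ for all $\vec x'$ greater than $\vec x$. A Pareto point of $f$ is an $\vec x$ with $f(\vec x)=\mathbf{true}$ and $f(\vec x')=\mathbf{false}$ for all $\vec x'$ smaller than $\vec x$. Procedure $\textsc{SearchParetoPoint}(\vec x,k,f)$: for $i=1,\dots,k$: set $\mathit{max}:=x_i+1$, $\mathit{min}:=0$; while $\mathit{max}-\mathit{min}>1$: $\mathit{mid}:=\mathit{min}+\lfloor(\mathit{max}-\mathit{min}-1)/2\rfloor$, $x_i:=\mathit{mid}$, and if $f(\vec x)=\mathbf{true}$ then $\mathit{max}:=\mathit{mid}+1$ else $\mathit{min}:=\mathit{mid}+1$; then $x_i:=\mathit{min}$. Return $\vec x$. Procedure $\textsc{ParetoEnumerate}(N,k,f)$: initialize $S:=\{(N,\dots,N)\}$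 and $P:=\emptyset$. Main loop: while $S\neq\emptyset$: pick (without removing) some $\vec x\in S$; if $f(\vec x)=\mathbf{true}$, then set $\vec x:=\textsc{SearchParetoPoint}(\vec x,k,f)$, set $P:=P\cup\{\vec x\}$, set $S':=\emptyset$, and for each $\vec y\in S$: if not $\vec x\le_k\vec y$, add $\vec y$ to $S'$; otherwise, for each $i\in\{1,\dots,k\}$ with $x_i>0$, add $(y_1,\dots,y_{i-1},x_i-1,y_{i+1},\dots,y_k)$ to $S'$; then set $S$ to the set of elements of $S'$ that are not smaller than any other element of $S'$. Otherwise (if $f(\vec x)=\mathbf{false}$), set $S:=S\setminus\{\vec x\}$. When the loop ends, return $P$. *)

theory Defs
  imports Main
begin

text \<open>Vectors in {0..N}^k are represented as lists of length k with entries \<le> N;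
  coordinate i (1-based in the paper) is list index i-1.\<close>

definition vecs :: "nat \<Rightarrow> nat \<Rightarrow> nat list set" where
  "vecs N k = {x. length x = k \<and> (\<forall>i<k. x ! i \<le> N)}"

definition vle :: "nat list \<Rightarrow> nat list \<Rightarrow> bool" where
  "vle x y \<longleftrightarrow> list_all2 (\<le>) x y"

definition smaller :: "nat list \<Rightarrow> nat list \<Rightarrow> bool" where
  "smaller x y \<longleftrightarrow> vle x y \<and> x \<noteq> y"

definition feasibility :: "nat \<Rightarrow> nat \<Rightarrow> (nat list \<Rightarrow> bool) \<Rightarrow> bool" where
  "feasibility N k f \<longleftrightarrow>
     (\<forall>x\<in>vecs N k. \<forall>x'\<in>vecs N k. f x \<and> smaller x x' \<longrightarrow> f x')"

definition pareto_points :: "nat \<Rightarrow> nat \<Rightarrow> (nat list \<Rightarrow> bool) \<Rightarrow> nat list set" where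
  "pareto_points N k f =
     {x\<in>vecs N k. f x \<and> (\<forall>x'\<in>vecs N k. smaller x' x \<longrightarrow> \<not> f x')}"

text \<open>Binary search for coordinate i (the inner while loop of SearchParetoPoint);
  returns the final value of min.\<close>
function bsearch :: "(nat list \<Rightarrow> bool) \<Rightarrow> nat list \<Rightarrow> nat \<Rightarrow> nat \<Rightarrow> nat \<Rightarrow> nat" where
  "bsearch f x i mn mx =
     (if mx - mn > 1 then
        (let mid = mn + (mx - mn - 1) div 2 in
         if f (x[i := mid]) then bsearch f x i mn (mid + 1)
         else bsearch f x i (mid + 1) mx)
      else mn)"
  by pat_completeness auto
termination
  by (relation "measure (\<lambda>(f, x, i, mn, mx). mx - mn)") auto

definition search_step :: "(nat list \<Rightarrow> bool) \<Rightarrow> nat list \<Rightarrow> nat \<Rightarrow> nat list" where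
  "search_step f x i = x[i := bsearch f x i 0 (x ! i + 1)]"

definition search_pareto_point :: "nat list \<Rightarrow> nat \<Rightarrow> (nat list \<Rightarrow> bool) \<Rightarrow> nat list" where
  "search_pareto_point x k f = foldl (search_step f) x [0..<k]"

definition update_S :: "nat \<Rightarrow> nat list \<Rightarrow> nat list set \<Rightarrow> nat list set" where
  "update_S k x S =
     (let S' = {y\<in>S. \<not> vle x y}
               \<union> {y[i := x ! i - 1] | y i. y \<in> S \<and> vle x y \<and> i < k \<and> x ! i > 0}
      in {y\<in>S'. \<not> (\<exists>z\<in>S'. smaller y z)})"

text \<open>One iteration of the main loop of ParetoEnumerate, on states (S, P), with an
  arbitrary choice of the picked element x \<in> S.\<close>
definition pe_step :: "nat \<Rightarrow> (nat list \<Rightarrow> bool) \<Rightarrow>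
    nat list set \<times> nat list set \<Rightarrow> nat list set \<times> nat list set \<Rightarrow> bool" where
  "pe_step k f st st' \<longleftrightarrow>
     (\<exists>x\<in>fst st.
        (f x \<and> (let x' = search_pareto_point x k f in
                   st' = (update_S k x' (fst st), insert x' (snd st))))
      \<or> (\<not> f x \<and> st' = (fst st - {x}, snd st)))"

definition pe_init :: "nat \<Rightarrow> nat \<Rightarrow> nat list set \<times> nat list set" where
  "pe_init N k = ({replicate k N}, {})"

end

theory Submission
  imports Defs
begin

declare bsearch.simps[simp del]

lemma vle_iff: "vle x y \<longleftrightarrow> length x = length y \<and> (\<forall>i<length x. x!i \<le> y!i)"
  by (simp add: vle_def list_all2_conv_all_nth)

lemma vecs_iff: "x \<in> vecs N k \<longleftrightarrow> length x = k \<and> (\<forall>i<k. x!i \<le> N)"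
  by (simp add: vecs_def)

lemma vle_refl: "vle x x" by (simp add: vle_iff)

lemma vle_trans: "vle x y \<Longrightarrow> vle y z \<Longrightarrow> vle x z"
  unfolding vle_def using list_all2_trans[of "(\<le>)" "(\<le>)" "(\<le>)"] order_trans by blast

lemma mono_f:
  assumes "feasibility N k f" "x \<in> vecs N k" "y \<in> vecs N k" "vle x y" "f x"
  shows "f y"
proof (cases "x = y")
  case True then show ?thesis using assms(5) by simp
next
  case False
  then have "smaller x y" using assms(4) by (simp add: smaller_def)
  then show ?thesis using assms(1-3,5) unfolding feasibility_def by blast
qed

lemma vecs_upd: "x \<in> vecs N k \<Longrightarrow> v \<le> N \<Longrightarrow> x[i := v] \<in> vecs N k"
  by (cases "i < k") (auto simp: vecs_iff nth_list_update)

lemma vle_upd: "vle x y \<Longrightarrow> v \<le> w \<Longrightarrow> vle (x[i:=v]) (y[i:=w])"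
  by (cases "i < length y") (auto simp: vle_iff nth_list_update)

lemma vle_upd_le: "length y = k \<Longrightarrow> v \<le> y!i \<Longrightarrow> vle (y[i:=v]) y"
  by (cases "i < length y") (auto simp: vle_iff nth_list_update)

lemma finite_vecs: "finite (vecs N k)"
proof -
  have "vecs N k \<subseteq> {xs. set xs \<subseteq> {0..N} \<and> length xs = k}"
    by (auto simp: vecs_iff in_set_conv_nth)
  moreover have "finite {xs. set xs \<subseteq> {0..N} \<and> length xs = k}"
    by (rule finite_lists_length_eq) simp
  ultimately show ?thesis by (rule finite_subset)
qed

lemma bsearch_correct:
  shows "feasibility N k f \<Longrightarrow> x \<in> vecs N k \<Longrightarrow> mn < mx \<Longrightarrow> mx - 1 \<le> N \<Longrightarrow> f (x[i := mx - 1]) \<Longrightarrow> (\<forall>v<mn. \<not> f (x[i:=v]))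
    \<Longrightarrow> bsearch f x i mn mx < mx \<and> f (x[i := bsearch f x i mn mx])
       \<and> (\<forall>v<bsearch f x i mn mx. \<not> f (x[i:=v]))"
proof (induction f x i mn mx rule: bsearch.induct)
  case (1 f x i mn mx)
  note fe = "1.prems"(1) and xv = "1.prems"(2)
  show ?case
  proof (cases "mx - mn > 1")
    case False
    then have m1: "mn = mx - 1" using "1.prems"(3) by linarith
    have "bsearch f x i mn mx = mn" using False by (subst bsearch.simps) simp
    then show ?thesis using "1.prems"(3-6) m1 by simp
  next
    case True
    define mid where "mid = mn + (mx - mn - 1) div 2"
    have mid: "mn \<le> mid" "mid < mx - 1" using True unfolding mid_def by auto
    show ?thesis
    proof (cases "f (x[i := mid])")
      case T: True
      have eq: "bsearch f x i mn mx = bsearch f x i mn (mid + 1)"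
        using True T by (subst bsearch.simps) (simp add: Let_def mid_def)
      have "bsearch f x i mn (mid+1) < mid + 1 \<and> f (x[i := bsearch f x i mn (mid+1)])
       \<and> (\<forall>v<bsearch f x i mn (mid+1). \<not> f (x[i:=v]))"
        using "1.IH"(1)[OF True mid_def T fe xv] "1.prems"(4,6) mid T by simp
      then show ?thesis unfolding eq using mid by auto
    next
      case F: False
      have eq: "bsearch f x i mn mx = bsearch f x i (mid + 1) mx"
        using True F by (subst bsearch.simps) (simp add: Let_def mid_def)
      have "\<forall>v<mid+1. \<not> f (x[i:=v])"
      proof (intro allI impI notI)
        fix v assume "v < mid + 1" "f (x[i:=v])"
        moreover have "x[i:=v] \<in> vecs N k" "x[i:=mid] \<in> vecs N k"
          using vecs_upd[OF xv] mid "1.prems"(4) \<open>v < mid+1\<close> by auto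
        moreover have "vle (x[i:=v]) (x[i:=mid])"
          using vle_upd[OF vle_refl] \<open>v < mid+1\<close> by simp
        ultimately have "f (x[i:=mid])" using mono_f[OF fe] by blast
        then show False using F by simp
      qed
      then have "bsearch f x i (mid+1) mx < mx \<and> f (x[i := bsearch f x i (mid+1) mx])
       \<and> (\<forall>v<bsearch f x i (mid+1) mx. \<not> f (x[i:=v]))"
        using "1.IH"(2)[OF True mid_def F fe xv] "1.prems"(4,5) mid by simp
      then show ?thesis unfolding eq by auto
    qed
  qed
qed

lemma search_step_correct:
  assumes fe: "feasibility N k f" and xv: "x \<in> vecs N k" and ik: "i < k" and fx: "f x"
  shows "search_step f x i \<in> vecs N k \<and> vle (search_step f x i) x \<and> f (search_step f x i)
    \<and> (search_step f x i ! i > 0 \<longrightarrow> \<not> f ((search_step f x i)[i := search_step f x i ! i - 1]))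
    \<and> (\<forall>j. j \<noteq> i \<longrightarrow> search_step f x i ! j = x ! j)"
proof -
  have len: "length x = k" and xi: "x ! i \<le> N" using xv ik by (auto simp: vecs_iff)
  have fx': "f (x[i := x!i + 1 - 1])" using fx by simp
  define r where "r = bsearch f x i 0 (x ! i + 1)"
  have br: "r < x!i + 1" "f (x[i := r])" "\<forall>v<r. \<not> f (x[i:=v])"
    using bsearch_correct[OF fe xv, of 0 "x!i+1"] fx xi unfolding r_def by auto
  have ss: "search_step f x i = x[i := r]" by (simp add: search_step_def r_def)
  show ?thesis unfolding ss
    using br len ik xi
    by (auto simp: vecs_upd[OF xv] vle_upd_le)
qed

lemma spp_gen:
  assumes fe: "feasibility N k f" and xv: "x \<in> vecs N k" and fx: "f x"
  shows "m \<le> k \<Longrightarrow> foldl (search_step f) x [0..<m] \<in> vecs N k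
    \<and> vle (foldl (search_step f) x [0..<m]) x \<and> f (foldl (search_step f) x [0..<m])
    \<and> (\<forall>j<m. foldl (search_step f) x [0..<m] ! j > 0 \<longrightarrow>
          \<not> f ((foldl (search_step f) x [0..<m])[j := foldl (search_step f) x [0..<m] ! j - 1]))"
proof (induction m)
  case 0
  then show ?case using xv fx by (simp add: vle_refl)
next
  case (Suc m)
  define y where "y = foldl (search_step f) x [0..<m]"
  have IH: "y \<in> vecs N k" "vle y x" "f y"
    "\<forall>j<m. y ! j > 0 \<longrightarrow> \<not> f (y[j := y ! j - 1])"
    using Suc unfolding y_def by auto
  have eq: "foldl (search_step f) x [0..<Suc m] = search_step f y m" by (simp add: y_def)
  define y' where "y' = search_step f y m"
  have S: "y' \<in> vecs N k" "vle y' y" "f y'" "y' ! m > 0 \<longrightarrow> \<not> f (y'[m := y' ! m - 1])"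
    "\<forall>j. j \<noteq> m \<longrightarrow> y' ! j = y ! j"
    using search_step_correct[OF fe IH(1) _ IH(3), of m] Suc.prems unfolding y'_def by auto
  have "\<forall>j<Suc m. y' ! j > 0 \<longrightarrow> \<not> f (y'[j := y' ! j - 1])"
  proof (intro allI impI)
    fix j assume j: "j < Suc m" "y' ! j > 0"
    show "\<not> f (y'[j := y' ! j - 1])"
    proof (cases "j = m")
      case True then show ?thesis using S j by simp
    next
      case False
      then have jm: "j < m" "y' ! j = y ! j" using j S by auto
      have yv: "y ! j \<le> N" using IH(1) jm Suc.prems by (auto simp: vecs_iff)
      have v1: "y'[j := y' ! j - 1] \<in> vecs N k" "y[j := y ! j - 1] \<in> vecs N k"
        using vecs_upd[OF S(1)] vecs_upd[OF IH(1)] yv jm by auto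
      have "vle (y'[j := y' ! j - 1]) (y[j := y ! j - 1])"
        using vle_upd[OF S(2)] jm by simp
      then show ?thesis using mono_f[OF fe v1] IH(4) jm j by auto
    qed
  qed
  moreover have "vle y' x" using vle_trans[OF S(2) IH(2)] .
  ultimately show ?case unfolding eq y'_def[symmetric] using S(1,3) by simp
qed

lemma pareto_intro:
  assumes fe: "feasibility N k f" and yv: "y \<in> vecs N k" and fy: "f y"
    and loc: "\<forall>j<k. y ! j > 0 \<longrightarrow> \<not> f (y[j := y ! j - 1])"
  shows "y \<in> pareto_points N k f"
  unfolding pareto_points_def
proof (intro CollectI conjI ballI impI yv fy notI)
  fix x' assume xv: "x' \<in> vecs N k" and sm: "smaller x' y" and fx: "f x'"
  have len: "length x' = k" "length y = k" using xv yv by (auto simp: vecs_iff)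
  have le: "\<forall>i<k. x'!i \<le> y!i" using sm len by (auto simp: smaller_def vle_iff)
  obtain j where j: "j < k" "x'!j \<noteq> y!j"
    using sm len by (auto simp: smaller_def list_eq_iff_nth_eq)
  then have lt: "x'!j < y!j" using le by (meson le_neq_implies_less)
  have yj: "y ! j \<le> N" using yv j by (auto simp: vecs_iff)
  have "vle x' (y[j := y!j - 1])"
    using len le lt j by (auto simp: vle_iff nth_list_update)
  moreover have "y[j := y!j - 1] \<in> vecs N k" using vecs_upd[OF yv] yj by simp
  ultimately have "f (y[j := y!j - 1])" using mono_f[OF fe xv] fx by blast
  then show False using loc j lt by auto
qed

lemma spp_correct:
  assumes fe: "feasibility N k f" and xv: "x \<in> vecs N k" and fx: "f x"
  shows "search_pareto_point x k f \<in> pareto_points N k f \<and> vle (search_pareto_point x k f) x"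
  using spp_gen[OF fe xv fx, of k] pareto_intro[OF fe]
  unfolding search_pareto_point_def by auto

lemma smaller_sum: assumes "smaller z w" shows "sum_list z < sum_list w"
proof -
  have len: "length z = length w" and le: "\<forall>i<length z. z!i \<le> w!i" and ne: "z \<noteq> w"
    using assms by (auto simp: smaller_def vle_iff)
  obtain j where j: "j < length z" "z!j \<noteq> w!j" using len ne by (auto simp: list_eq_iff_nth_eq)
  have "(\<Sum>i = 0..<length z. z!i) < (\<Sum>i = 0..<length z. w!i)"
    by (rule sum_strict_mono_ex1) (use le j in \<open>auto intro!: bexI[of _ j] simp: le_neq_implies_less\<close>)
  then show ?thesis using len by (simp add: sum_list_sum_nth)
qed

lemma max_elem:
  assumes "finite A" "y \<in> A"
  shows "\<exists>z\<in>{y\<in>A. \<not> (\<exists>w\<in>A. smaller y w)}. vle y z"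
proof -
  let ?B = "{z\<in>A. vle y z}"
  have fB: "finite ?B" "?B \<noteq> {}" using assms vle_refl by auto
  obtain z where z: "z \<in> ?B" "sum_list z = Max (sum_list ` ?B)"
    using Max_in[of "sum_list ` ?B"] fB by (metis (no_types, lifting) empty_is_image finite_imageI imageE)
  have "\<not> (\<exists>w\<in>A. smaller z w)"
  proof
    assume "\<exists>w\<in>A. smaller z w"
    then obtain w where w: "w \<in> A" "smaller z w" by blast
    then have "w \<in> ?B" using z vle_trans by (auto simp: smaller_def)
    then have "sum_list w \<le> sum_list z" using z fB by simp
    then show False using smaller_sum[OF w(2)] by simp
  qed
  then show ?thesis using z by auto
qed

definition Inv :: "nat \<Rightarrow> nat \<Rightarrow> (nat list \<Rightarrow> bool) \<Rightarrow> nat list set \<times> nat list set \<Rightarrow> bool" where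
  "Inv N k f st \<longleftrightarrow> fst st \<subseteq> vecs N k \<and> snd st \<subseteq> pareto_points N k f
     \<and> (\<forall>y\<in>fst st. \<forall>p\<in>snd st. \<not> vle p y)
     \<and> (\<forall>v\<in>vecs N k. f v \<longrightarrow> (\<exists>p\<in>snd st. vle p v) \<or> (\<exists>y\<in>fst st. vle v y))"

lemma Inv_init: "Inv N k f (pe_init N k)"
  by (auto simp: Inv_def pe_init_def vecs_iff vle_iff)

lemma update_S_props:
  assumes S: "S \<subseteq> vecs N k" and xv: "x \<in> vecs N k"
  shows "update_S k x S \<subseteq> vecs N k"
    and "\<And>y. y \<in> update_S k x S \<Longrightarrow> (y \<in> S \<and> \<not> vle x y) \<or>
          (\<exists>z i. y = z[i := x ! i - 1] \<and> z \<in> S \<and> vle x z \<and> i < k \<and> x ! i > 0)"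
    and "\<And>v. v \<in> vecs N k \<Longrightarrow> (\<exists>y\<in>S. vle v y) \<Longrightarrow> \<not> vle x v \<Longrightarrow> \<exists>z\<in>update_S k x S. vle v z"
proof -
  define S' where "S' = {y\<in>S. \<not> vle x y}
               \<union> {y[i := x ! i - 1] | y i. y \<in> S \<and> vle x y \<and> i < k \<and> x ! i > 0}"
  have U: "update_S k x S = {y\<in>S'. \<not> (\<exists>z\<in>S'. smaller y z)}"
    by (simp add: update_S_def S'_def Let_def)
  have S'v: "S' \<subseteq> vecs N k"
  proof
    fix y assume "y \<in> S'"
    then consider "y \<in> S" | z i where "y = z[i := x ! i - 1]" "z \<in> S" "i < k"
      unfolding S'_def by blast
    then show "y \<in> vecs N k"
    proof cases
      case 1 then show ?thesis using S by blast
    next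
      case (2 z i)
      then have "x ! i - 1 \<le> N" using xv by (auto simp: vecs_iff)
      then show ?thesis using vecs_upd[of z N k] S 2 by blast
    qed
  qed
  show "update_S k x S \<subseteq> vecs N k" using S'v U by auto
  show "\<And>y. y \<in> update_S k x S \<Longrightarrow> (y \<in> S \<and> \<not> vle x y) \<or>
          (\<exists>z i. y = z[i := x ! i - 1] \<and> z \<in> S \<and> vle x z \<and> i < k \<and> x ! i > 0)"
    unfolding U S'_def by blast
  have fS': "finite S'" using S'v finite_vecs finite_subset by blast
  fix v assume vv: "v \<in> vecs N k" and ex: "\<exists>y\<in>S. vle v y" and nx: "\<not> vle x v"
  obtain y where y: "y \<in> S" "vle v y" using ex by blast
  have "\<exists>y'\<in>S'. vle v y'"
  proof (cases "vle x y")
    case False then show ?thesis using y by (auto simp: S'_def)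
  next
    case True
    have len: "length x = k" "length v = k" "length y = k"
      using xv vv S y by (auto simp: vecs_iff)
    obtain i where i: "i < k" "v ! i < x ! i" using nx len by (auto simp: vle_iff not_le)
    have "x ! i > 0" using i by simp
    then have "y[i := x ! i - 1] \<in> S'" using y True i unfolding S'_def by blast
    moreover have "vle v (y[i := x ! i - 1])" using y(2) i len
      by (auto simp: vle_iff nth_list_update)
    ultimately show ?thesis by blast
  qed
  then obtain y' where "y' \<in> S'" "vle v y'" by blast
  then show "\<exists>z\<in>update_S k x S. vle v z"
    using max_elem[OF fS' \<open>y' \<in> S'\<close>] vle_trans unfolding U by blast
qed


definition mu :: "nat \<Rightarrow> nat \<Rightarrow> (nat list \<Rightarrow> bool) \<Rightarrow> nat list set \<times> nat list set \<Rightarrow> nat" where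
  "mu N k f st = card (pareto_points N k f - snd st) * (card (vecs N k) + 1) + card (fst st)"

lemma Inv_step:
  assumes fe: "feasibility N k f" and I: "Inv N k f (S, P)" and st: "pe_step k f (S, P) st'"
  shows "Inv N k f st' \<and> mu N k f st' < mu N k f (S, P)"
proof -
  have Sv: "S \<subseteq> vecs N k" and Pp: "P \<subseteq> pareto_points N k f"
    and np: "\<forall>y\<in>S. \<forall>p\<in>P. \<not> vle p y"
    and cov: "\<forall>v\<in>vecs N k. f v \<longrightarrow> (\<exists>p\<in>P. vle p v) \<or> (\<exists>y\<in>S. vle v y)"
    using I by (auto simp: Inv_def)
  have fin: "finite (vecs N k)" by (rule finite_vecs)
  have fpp: "finite (pareto_points N k f)" using finite_subset[OF _ fin]
    by (auto simp: pareto_points_def)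
  have cS: "card S \<le> card (vecs N k)" using Sv fin by (rule card_mono[rotated])
  obtain x where xS: "x \<in> S" and
    cases: "(f x \<and> st' = (update_S k (search_pareto_point x k f) S, insert (search_pareto_point x k f) P))
      \<or> (\<not> f x \<and> st' = (S - {x}, P))"
    using st unfolding pe_step_def by (auto simp: Let_def)
  have xv: "x \<in> vecs N k" using xS Sv by blast
  from cases show ?thesis
  proof
    assume A: "f x \<and> st' = (update_S k (search_pareto_point x k f) S, insert (search_pareto_point x k f) P)"
    define x' where "x' = search_pareto_point x k f"
    have st': "st' = (update_S k x' S, insert x' P)" using A x'_def by simp
    have x'p: "x' \<in> pareto_points N k f" and x'x: "vle x' x"
      using spp_correct[OF fe xv] A x'_def by auto
    have x'v: "x' \<in> vecs N k" using x'p by (simp add: pareto_points_def)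
    have x'P: "x' \<notin> P" using np xS x'x by blast
    note U = update_S_props[OF Sv x'v]
    have I1: "update_S k x' S \<subseteq> vecs N k" using U(1) .
    have I2: "insert x' P \<subseteq> pareto_points N k f" using Pp x'p by blast
    have I3: "\<forall>y\<in>update_S k x' S. \<forall>p\<in>insert x' P. \<not> vle p y"
    proof (intro ballI)
      fix y p assume y: "y \<in> update_S k x' S" and p: "p \<in> insert x' P"
      from U(2)[OF y] show "\<not> vle p y"
      proof
        assume "y \<in> S \<and> \<not> vle x' y" then show ?thesis using np p by blast
      next
        assume "\<exists>z i. y = z[i := x' ! i - 1] \<and> z \<in> S \<and> vle x' z \<and> i < k \<and> x' ! i > 0"
        then obtain z i where z: "y = z[i := x' ! i - 1]" "z \<in> S" "vle x' z" "i < k" "x' ! i > 0"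
          by blast
        have lz: "length z = k" "length x' = k" using z Sv x'v by (auto simp: vecs_iff)
        have zi: "x' ! i \<le> z ! i" using z(3,4) lz by (auto simp: vle_iff)
        have yz: "vle y z" using vle_upd_le[OF lz(1), of "x' ! i - 1" i] zi z(1) by simp
        show ?thesis
        proof
          assume pv: "vle p y"
          show False
          proof (cases "p = x'")
            case True
            then have "x' ! i \<le> y ! i" using pv z lz by (auto simp: vle_iff)
            then show False using z lz by simp
          next
            case False
            then have "p \<in> P" using p by blast
            then show False using np z(2) vle_trans[OF pv yz] by blast
          qed
        qed
      qed
    qed
    have I4: "\<forall>v\<in>vecs N k. f v \<longrightarrow> (\<exists>p\<in>insert x' P. vle p v) \<or> (\<exists>y\<in>update_S k x' S. vle v y)"
    proof (intro ballI impI)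
      fix v assume vv: "v \<in> vecs N k" and fv: "f v"
      show "(\<exists>p\<in>insert x' P. vle p v) \<or> (\<exists>y\<in>update_S k x' S. vle v y)"
      proof (cases "vle x' v")
        case True then show ?thesis by blast
      next
        case False
        from cov vv fv have "(\<exists>p\<in>P. vle p v) \<or> (\<exists>y\<in>S. vle v y)" by blast
        then show ?thesis
        proof
          assume "\<exists>p\<in>P. vle p v" then show ?thesis by blast
        next
          assume "\<exists>y\<in>S. vle v y" then show ?thesis using U(3)[OF vv _ False] by blast
        qed
      qed
    qed
    have inv: "Inv N k f st'" unfolding st' Inv_def using I1 I2 I3 I4 by simp
    have c1: "card (update_S k x' S) \<le> card (vecs N k)" using I1 fin by (rule card_mono[rotated])
    have "pareto_points N k f - insert x' P = (pareto_points N k f - P) - {x'}" by blast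
    moreover have "x' \<in> pareto_points N k f - P" using x'p x'P by blast
    moreover have "finite (pareto_points N k f - P)" using fpp by blast
    ultimately have c2: "card (pareto_points N k f - insert x' P) + 1 = card (pareto_points N k f - P)"
      using card_Suc_Diff1[of "pareto_points N k f - P" x'] by simp
    have "mu N k f st' < mu N k f (S, P)"
    proof -
      let ?c = "card (pareto_points N k f - insert x' P)" and ?M = "card (vecs N k)"
      have "mu N k f st' = ?c * (?M + 1) + card (update_S k x' S)" by (simp add: mu_def st')
      also have "\<dots> < ?c * (?M + 1) + (?M + 1)" using c1 by simp
      also have "\<dots> = (?c + 1) * (?M + 1)" by simp
      also have "\<dots> \<le> mu N k f (S, P)" unfolding mu_def using c2 by simp
      finally show ?thesis .
    qed
    then show ?thesis using inv by simp
  next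
    assume B: "\<not> f x \<and> st' = (S - {x}, P)"
    have I4: "\<forall>v\<in>vecs N k. f v \<longrightarrow> (\<exists>p\<in>P. vle p v) \<or> (\<exists>y\<in>S - {x}. vle v y)"
    proof (intro ballI impI)
      fix v assume vv: "v \<in> vecs N k" and fv: "f v"
      from cov vv fv have "(\<exists>p\<in>P. vle p v) \<or> (\<exists>y\<in>S. vle v y)" by blast
      moreover have "\<not> vle v x" using mono_f[OF fe vv xv] fv B by blast
      ultimately show "(\<exists>p\<in>P. vle p v) \<or> (\<exists>y\<in>S - {x}. vle v y)" by blast
    qed
    have inv: "Inv N k f st'" using B Sv Pp np I4 by (auto simp: Inv_def)
    have "finite S" using Sv fin finite_subset by blast
    then have "card (S - {x}) < card S" using xS by (rule card_Diff1_less)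
    then have "mu N k f st' < mu N k f (S, P)" using B by (simp add: mu_def)
    then show ?thesis using inv by simp
  qed
qed

lemma Inv_final:
  assumes I: "Inv N k f ({}, P)"
  shows "P = pareto_points N k f"
proof
  show "P \<subseteq> pareto_points N k f" using I by (simp add: Inv_def)
  show "pareto_points N k f \<subseteq> P"
  proof
    fix v assume v: "v \<in> pareto_points N k f"
    then have vv: "v \<in> vecs N k" and fv: "f v"
      and mn: "\<forall>x'\<in>vecs N k. smaller x' v \<longrightarrow> \<not> f x'" by (auto simp: pareto_points_def)
    obtain p where p: "p \<in> P" "vle p v" using I vv fv by (auto simp: Inv_def)
    have "p \<in> pareto_points N k f" using I p by (auto simp: Inv_def)
    then have "p \<in> vecs N k" "f p" by (auto simp: pareto_points_def)
    then have "p = v" using mn p(2) by (auto simp: smaller_def)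
    then show "v \<in> P" using p by simp
  qed
qed

theorem corollary1:
  fixes N k :: nat and f :: "nat list \<Rightarrow> bool"
  assumes "k \<ge> 1"
    and "feasibility N k f"
  shows "\<not> (\<exists>r. r 0 = pe_init N k \<and> (\<forall>n. pe_step k f (r n) (r (Suc n))))
         \<and> (\<forall>S P. (pe_step k f)\<^sup>*\<^sup>* (pe_init N k) (S, P) \<and> S = {}
               \<longrightarrow> P = pareto_points N k f)"
proof
  note fe = assms(2)
  have step: "Inv N k f st' \<and> mu N k f st' < mu N k f st"
    if "Inv N k f st" "pe_step k f st st'" for st st'
  proof -
    obtain S P where "st = (S, P)" by (cases st)
    then show ?thesis using Inv_step[OF fe, of S P st'] that by simp
  qed
  show "\<not> (\<exists>r. r 0 = pe_init N k \<and> (\<forall>n. pe_step k f (r n) (r (Suc n))))"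
  proof
    assume "\<exists>r. r 0 = pe_init N k \<and> (\<forall>n. pe_step k f (r n) (r (Suc n)))"
    then obtain r where r0: "r 0 = pe_init N k" and rs: "\<forall>n. pe_step k f (r n) (r (Suc n))" by blast
    have "\<And>n. Inv N k f (r n) \<and> mu N k f (r n) + n \<le> mu N k f (r 0)"
    proof -
      fix n show "Inv N k f (r n) \<and> mu N k f (r n) + n \<le> mu N k f (r 0)"
      proof (induction n)
        case 0 then show ?case using r0 Inv_init by simp
      next
        case (Suc n)
        have "Inv N k f (r (Suc n)) \<and> mu N k f (r (Suc n)) < mu N k f (r n)"
          using step[of "r n" "r (Suc n)"] rs Suc by blast
        then show ?case using Suc by simp
      qed
    qed
    from this[of "Suc (mu N k f (r 0))"] show False by simp
  qed
  show "\<forall>S P. (pe_step k f)\<^sup>*\<^sup>* (pe_init N k) (S, P) \<and> S = {} \<longrightarrow> P = pareto_points N k f"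
  proof (intro allI impI)
    fix S P assume a: "(pe_step k f)\<^sup>*\<^sup>* (pe_init N k) (S, P) \<and> S = {}"
    have step_inv: "Inv N k f z" if "Inv N k f y" "pe_step k f y z" for y z
      using step[OF that] by blast
    have "Inv N k f (S, P)"
    proof -
      have "(pe_step k f)\<^sup>*\<^sup>* (pe_init N k) (S, P)" using a by (rule conjunct1)
      then show ?thesis
      proof (induction rule: rtranclp_induct)
        case base then show ?case by (rule Inv_init)
      next
        case (step y z) then show ?case using step(3) \<open>pe_step k f y z\<close> step_inv by blast
      qed
    qed
    then show "P = pareto_points N k f" using a Inv_final by simp
  qed
qed

end
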